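(* Let $H$ be a finite abelian group and $k$ a positive integer. Suppose that for infinitely many primes $p$, every non-zero sum subset of size $k$ of $(\mathbb{Z}_p \times H) \setminus \{0_{\mathbb{Z}_p\times H}\}$ is sequenceable. Then for every torsion-free abelian group $G$, every non-zero sum subset of size $k$ of $(G \times H) \setminus \{0_{G\times H}\}$ is sequenceable.
   Context: For a finite subset $S$ of an abelian group with $|S| = k$, an ordering $(x_1,\dots,x_k)$ of $S$ has partial sums $(y_0,\dots,y_k)$ with $y_0 = 0$, $y_i = x_1+\cdots+x_i$. It is a sequencing if the $y_i$ are pairwise distinct, and a rotational sequencing if they are pairwise distinct except that $y_k = y_0 = 0$; $S$ is sequenceable if it has one or the other. $S$ is non-zero sum if the sum of its elements is nonzero. *)

theory Defs
  imports "HOL-Computational_Algebra.Primes"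
begin

(* Abelian groups are given here by an addition operation add and a neutral element z,
   so that both Z_p x H (p varying) and G x H can be treated uniformly. *)

definition psum :: "('a \<Rightarrow> 'a \<Rightarrow> 'a) \<Rightarrow> 'a \<Rightarrow> 'a list \<Rightarrow> nat \<Rightarrow> 'a" where
  "psum add z xs i = foldl add z (take i xs)"

definition is_sequencing :: "('a \<Rightarrow> 'a \<Rightarrow> 'a) \<Rightarrow> 'a \<Rightarrow> 'a list \<Rightarrow> bool" where
  "is_sequencing add z xs \<longleftrightarrow> distinct (map (psum add z xs) [0..<Suc (length xs)])"

definition is_rot_sequencing :: "('a \<Rightarrow> 'a \<Rightarrow> 'a) \<Rightarrow> 'a \<Rightarrow> 'a list \<Rightarrow> bool" where
  "is_rot_sequencing add z xs \<longleftrightarrow>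
     distinct (map (psum add z xs) [0..<length xs]) \<and> psum add z xs (length xs) = z"

definition sequenceable :: "('a \<Rightarrow> 'a \<Rightarrow> 'a) \<Rightarrow> 'a \<Rightarrow> 'a set \<Rightarrow> bool" where
  "sequenceable add z S \<longleftrightarrow>
     (\<exists>xs. distinct xs \<and> set xs = S \<and> (is_sequencing add z xs \<or> is_rot_sequencing add z xs))"

(* sum of the elements of S (computed along some listing of S; all listings agree
   in an abelian group) is non-zero *)
definition nonzero_sum :: "('a \<Rightarrow> 'a \<Rightarrow> 'a) \<Rightarrow> 'a \<Rightarrow> 'a set \<Rightarrow> bool" where
  "nonzero_sum add z S \<longleftrightarrow> (\<exists>xs. distinct xs \<and> set xs = S \<and> foldl add z xs \<noteq> z)"

(* the group Z_p x H, with Z_p represented by {0..<p} *)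
definition zp_add :: "nat \<Rightarrow> nat \<times> 'h::ab_group_add \<Rightarrow> nat \<times> 'h \<Rightarrow> nat \<times> 'h" where
  "zp_add p u v = ((fst u + fst v) mod p, snd u + snd v)"

definition prod_add :: "'g::ab_group_add \<times> 'h::ab_group_add \<Rightarrow> 'g \<times> 'h \<Rightarrow> 'g \<times> 'h" where
  "prod_add u v = (fst u + fst v, snd u + snd v)"

definition torsion_free :: "'g::ab_group_add itself \<Rightarrow> bool" where
  "torsion_free _ \<longleftrightarrow> (\<forall>x::'g. \<forall>n::nat. 0 < n \<longrightarrow> (\<Sum>i<n. x) = 0 \<longrightarrow> x = 0)"

end

theory Submission imports Defs Complex_Main begin


definition nmul :: "nat \<Rightarrow> 'a::ab_group_add \<Rightarrow> 'a" where "nmul n x = (\<Sum>i<n. x)"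

lemma nmul_0[simp]: "nmul 0 x = 0" by (simp add: nmul_def)
lemma nmul_Suc[simp]: "nmul (Suc n) x = nmul n x + x" by (simp add: nmul_def)
lemma nmul_add: "nmul (a+b) x = nmul a x + nmul b x" by (induct b) (simp_all add: add.assoc)
lemma nmul_plus: "nmul a (x+y) = nmul a x + nmul a y" by (induct a) (simp_all add: algebra_simps)
lemma nmul_minus: "nmul a (x-y) = nmul a x - nmul a y" by (induct a) (simp_all add: algebra_simps)
lemma nmul_mult: "nmul (a*c) x = nmul a (nmul c x)"
  by (induct a) (simp_all add: nmul_add algebra_simps)

definition zmul :: "int \<Rightarrow> 'a::ab_group_add \<Rightarrow> 'a" where
  "zmul m x = nmul (nat m) x - nmul (nat (-m)) x"

lemma zmul_diff: "zmul (int a - int b) x = nmul a x - nmul b x"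
proof (cases "b \<le> a")
  case True
  then have "nat (int a - int b) = a - b" "nat (-(int a - int b)) = 0" by auto
  moreover have "nmul a x = nmul (a-b) x + nmul b x" using True nmul_add[of "a-b" b x] by simp
  ultimately show ?thesis by (simp add: zmul_def)
next
  case False
  then have "nat (int a - int b) = 0" "nat (-(int a - int b)) = b - a" by auto
  moreover have "nmul b x = nmul (b-a) x + nmul a x" using False nmul_add[of "b-a" a x] by simp
  ultimately show ?thesis by (simp add: zmul_def)
qed

lemma int_rep: obtains a b where "m = int a - int b"
  using that[of "nat m" "nat (-m)"] by (cases "m \<ge> 0") auto

lemma zmul_add: "zmul (m+n) x = zmul m x + zmul n x"
proof -
  obtain a b where m: "m = int a - int b" by (rule int_rep)
  obtain c d where n: "n = int c - int d" by (rule int_rep)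
  have "m + n = int (a+c) - int (b+d)" unfolding m n by simp
  then have E1: "zmul (m+n) x = nmul (a+c) x - nmul (b+d) x" by (simp only: zmul_diff)
  have E2: "zmul m x = nmul a x - nmul b x" by (simp only: m zmul_diff)
  have E3: "zmul n x = nmul c x - nmul d x" by (simp only: n zmul_diff)
  show ?thesis unfolding E1 E2 E3 nmul_add by (simp add: algebra_simps)
qed

lemma zmul_mult: "zmul (m*n) x = zmul m (zmul n x)"
proof -
  obtain a b where m: "m = int a - int b" by (rule int_rep)
  obtain c d where n: "n = int c - int d" by (rule int_rep)
  have "m * n = int (a*c+b*d) - int (a*d+b*c)" unfolding m n by (simp add: algebra_simps)
  then have E1: "zmul (m*n) x = nmul (a*c+b*d) x - nmul (a*d+b*c) x" by (simp only: zmul_diff)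
  have E2: "zmul m y = nmul a y - nmul b y" for y by (simp only: m zmul_diff)
  have E3: "zmul n x = nmul c x - nmul d x" by (simp only: n zmul_diff)
  show ?thesis unfolding E1 E2 E3 nmul_add nmul_minus nmul_mult by (simp add: algebra_simps)
qed

lemma zmul_int: "zmul (int n) x = nmul n x" by (simp add: zmul_def)
lemma zmul_0[simp]: "zmul 0 x = 0" by (simp add: zmul_def)
lemma zmul_1[simp]: "zmul 1 x = x" by (simp add: zmul_def nmul_def)
lemma zmul_neg: "zmul (-m) x = - zmul m x"
  using zmul_add[of m "-m" x] by (simp add: eq_neg_iff_add_eq_0 add.commute)

lemma zmul_torsion:
  assumes "torsion_free TYPE('a::ab_group_add)" "zmul m (x::'a) = 0" "m \<noteq> 0"
  shows "x = 0"
proof (cases "m > 0")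
  case True
  then have "nmul (nat m) x = 0" using assms(2) zmul_int[of "nat m" x] by simp
  moreover have "nat m > 0" using True by simp
  ultimately show ?thesis using assms(1) unfolding torsion_free_def nmul_def by blast
next
  case False
  then have "nmul (nat (-m)) x = 0" using assms zmul_int[of "nat (-m)" x] zmul_neg[of "-m" x] by simp
  moreover have "nat (-m) > 0" using False assms(3) by simp
  ultimately show ?thesis using assms(1) unfolding torsion_free_def nmul_def by blast
qed

inductive_set zspan :: "'a::ab_group_add set \<Rightarrow> 'a set" for X where
  z0: "0 \<in> zspan X"
| zadd: "x \<in> zspan X \<Longrightarrow> g \<in> X \<Longrightarrow> x + g \<in> zspan X"
| zsub: "x \<in> zspan X \<Longrightarrow> g \<in> X \<Longrightarrow> x - g \<in> zspan X"

lemma zspan_add: assumes "x \<in> zspan X" "y \<in> zspan X" shows "x + y \<in> zspan X"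
  using assms(2)
proof (induct y rule: zspan.induct)
  case z0 then show ?case using assms(1) by simp
next
  case (zadd y g) then show ?case using zspan.zadd[of "x+y" X g] by (simp add: add.assoc)
next
  case (zsub y g) then show ?case using zspan.zsub[of "x+y" X g] by (simp add: add_diff_eq)
qed

lemma zspan_neg: "x \<in> zspan X \<Longrightarrow> -x \<in> zspan X"
proof (induct x rule: zspan.induct)
  case z0 then show ?case by (simp add: zspan.z0)
next
  case (zadd y g) then show ?case using zspan.zsub[of "-y" X g] by simp
next
  case (zsub y g) then show ?case using zspan.zadd[of "-y" X g] by simp
qed

lemma zspan_diff: "x \<in> zspan X \<Longrightarrow> y \<in> zspan X \<Longrightarrow> x - y \<in> zspan X"
  using zspan_add[of x X "-y"] zspan_neg[of y X] by simp

lemma zspan_gen: "g \<in> X \<Longrightarrow> g \<in> zspan X"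
  using zspan.zadd[OF zspan.z0, of g X] by simp

lemma zspan_mono: "X \<subseteq> Y \<Longrightarrow> zspan X \<subseteq> zspan Y"
proof
  fix x assume "X \<subseteq> Y" "x \<in> zspan X"
  from \<open>x \<in> zspan X\<close> \<open>X \<subseteq> Y\<close> show "x \<in> zspan Y"
    by (induct x rule: zspan.induct) (auto intro: zspan.intros)
qed

lemma zspan_empty: "zspan {} = {0}"
proof -
  have "x \<in> zspan {} \<Longrightarrow> x = 0" for x::'a by (induct x rule: zspan.induct) auto
  then show ?thesis using zspan.z0 by blast
qed

lemma zspan_nmul: "x \<in> zspan X \<Longrightarrow> nmul n x \<in> zspan X"
  by (induct n) (auto intro: zspan_add zspan.z0)

lemma zspan_zmul: "x \<in> zspan X \<Longrightarrow> zmul m x \<in> zspan X"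
  unfolding zmul_def by (intro zspan_diff zspan_nmul)

lemma zspan_insert: "zspan (insert g Y) = {b + zmul m g | b m. b \<in> zspan Y}"
proof
  show "zspan (insert g Y) \<subseteq> {b + zmul m g | b m. b \<in> zspan Y}"
  proof
    fix x assume "x \<in> zspan (insert g Y)"
    then show "x \<in> {b + zmul m g | b m. b \<in> zspan Y}"
    proof (induct x rule: zspan.induct)
      case z0
      have "(0::'a) = 0 + zmul 0 g" by simp
      then show ?case using zspan.z0[of Y] by blast
    next
      case (zadd x h)
      then obtain b m where bm: "x = b + zmul m g" "b \<in> zspan Y" by auto
      show ?case
      proof (cases "h = g")
        case True
        then have "x + h = b + zmul (m+1) g" using bm by (simp add: zmul_add add.assoc)
        then show ?thesis using bm by blast
      next
        case False
        then have "h \<in> Y" using zadd by auto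
        then have "b + h \<in> zspan Y" using bm zspan.zadd by blast
        moreover have "x + h = (b + h) + zmul m g" using bm by (simp add: algebra_simps)
        ultimately show ?thesis by blast
      qed
    next
      case (zsub x h)
      then obtain b m where bm: "x = b + zmul m g" "b \<in> zspan Y" by auto
      show ?case
      proof (cases "h = g")
        case True
        then have "x - h = b + zmul (m + -1) g" using bm zmul_add[of m "-1" g] zmul_neg[of 1 g] by simp
        then show ?thesis using bm by blast
      next
        case False
        then have "h \<in> Y" using zsub by auto
        then have "b - h \<in> zspan Y" using bm zspan.zsub by blast
        moreover have "x - h = (b - h) + zmul m g" using bm by (simp add: algebra_simps)
        ultimately show ?thesis by blast
      qed
    qed
  qed
next
  show "{b + zmul m g | b m. b \<in> zspan Y} \<subseteq> zspan (insert g Y)"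
  proof clarify
    fix b m assume "b \<in> zspan Y"
    then have "b \<in> zspan (insert g Y)" using zspan_mono[of Y "insert g Y"] by blast
    moreover have "zmul m g \<in> zspan (insert g Y)" by (intro zspan_zmul zspan_gen) simp
    ultimately show "b + zmul m g \<in> zspan (insert g Y)" by (rule zspan_add)
  qed
qed

definition addh :: "'a::ab_group_add set \<Rightarrow> ('a \<Rightarrow> rat) \<Rightarrow> bool" where
  "addh B f \<longleftrightarrow> (\<forall>x\<in>B. \<forall>y\<in>B. f (x+y) = f x + f y)"

lemma addh_0: "addh (zspan X) f \<Longrightarrow> f 0 = 0"
  unfolding addh_def using zspan.z0[of X] by fastforce

lemma addh_neg: "addh (zspan X) f \<Longrightarrow> x \<in> zspan X \<Longrightarrow> f (-x) = - f x"
  using addh_0[of X f] zspan_neg[of x X] unfolding addh_def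
  by (metis add.right_inverse add_eq_0_iff)

lemma addh_diff: "addh (zspan X) f \<Longrightarrow> x \<in> zspan X \<Longrightarrow> y \<in> zspan X \<Longrightarrow> f (x - y) = f x - f y"
  using addh_neg[of X f y] zspan_neg[of y X] unfolding addh_def
  by (metis diff_conv_add_uminus)

lemma addh_nmul: "addh (zspan X) f \<Longrightarrow> x \<in> zspan X \<Longrightarrow> f (nmul n x) = of_nat n * f x"
proof (induct n)
  case 0 then show ?case using addh_0 by simp
next
  case (Suc n) then show ?case using zspan_nmul[of x X n] unfolding addh_def
    by (simp add: algebra_simps)
qed

lemma addh_zmul: assumes "addh (zspan X) f" "x \<in> zspan X" shows "f (zmul m x) = of_int m * f x"
  using assms
proof (cases "m \<ge> 0")
  case True
  then show ?thesis using zmul_int[of "nat m" x] addh_nmul[of X f x "nat m"] assms by simp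
next
  case False
  then have "zmul m x = - nmul (nat (-m)) x" using zmul_int[of "nat (-m)" x] zmul_neg[of "-m" x] by simp
  then show ?thesis using False addh_neg[of X f "nmul (nat (-m)) x"] zspan_nmul[of x X] addh_nmul[of X f x "nat (-m)"] assms
    by simp
qed



lemma ext_one:
  fixes f :: "'a::ab_group_add \<Rightarrow> rat"
  assumes hf: "addh (zspan Y) f"
  shows "\<exists>f'. addh (zspan (insert g Y)) f' \<and> (\<forall>x\<in>zspan Y. f' x = f x)
             \<and> ((\<forall>n>0. zmul n g \<notin> zspan Y) \<longrightarrow> f' g = q0)"
proof -
  let ?B = "zspan Y"
  define P where "P = (\<lambda>n::nat. n > 0 \<and> zmul (int n) g \<in> ?B)"
  define q where "q = (if \<exists>n. P n then f (zmul (int (LEAST n. P n)) g) / of_nat (LEAST n. P n) else q0)"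
  have wd: "f b + of_int m * q = f b' + of_int m' * q"
    if "b \<in> ?B" "b' \<in> ?B" "b + zmul m g = b' + zmul m' g" for b b' m m'
  proof -
    define j where "j = m - m'"
    have "zmul m g = zmul j g + zmul m' g" using zmul_add[of j m' g] by (simp add: j_def)
    then have zj: "zmul j g = b' - b" using that(3) by (simp add: algebra_simps)
    have jB: "zmul j g \<in> ?B" using zj zspan_diff that(1,2) by simp
    have fd: "f b' - f b = f (zmul j g)" using zj addh_diff[OF hf that(2) that(1)] by simp
    show ?thesis
    proof (cases "\<exists>n. P n")
      case False
      have "j = 0"
      proof (rule ccontr)
        assume "j \<noteq> 0"
        then consider "j > 0" | "j < 0" by linarith
        then show False
        proof cases
          case 1 then have "P (nat j)" using jB by (simp add: P_def)
          then show False using False by blast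
        next
          case 2
          have "zmul (-j) g \<in> ?B" using zspan_neg[OF jB] zmul_neg[of j g] by simp
          then have "P (nat (-j))" using 2 by (simp add: P_def)
          then show False using False by blast
        qed
      qed
      then have "m = m'" "b = b'" using zj j_def by auto
      then show ?thesis by simp
    next
      case True
      define n0 where "n0 = (LEAST n. P n)"
      have Pn0: "P n0" unfolding n0_def using True by (metis LeastI)
      have q: "q = f (zmul (int n0) g) / of_nat n0" unfolding q_def n0_def using True by simp
      define t where "t = j div int n0"
      define r where "r = j mod int n0"
      have jr: "j = t * int n0 + r" by (simp add: t_def r_def)
      have r0: "0 \<le> r" "r < int n0" using Pn0 by (auto simp: r_def P_def)
      have n0B: "zmul (int n0) g \<in> ?B" using Pn0 P_def by simp
      have "zmul j g = zmul t (zmul (int n0) g) + zmul r g"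
        using jr zmul_add[of "t * int n0" r g] zmul_mult[of t "int n0" g] by simp
      then have "zmul r g = zmul j g - zmul t (zmul (int n0) g)" by (simp add: algebra_simps)
      then have rB: "zmul r g \<in> ?B" using zspan_diff[OF jB zspan_zmul[OF n0B]] by simp
      have "r = 0"
      proof (rule ccontr)
        assume "r \<noteq> 0"
        then have "P (nat r)" using r0 rB by (simp add: P_def)
        moreover have "nat r < n0" using r0 by simp
        ultimately show False using not_less_Least n0_def by blast
      qed
      then have "zmul j g = zmul t (zmul (int n0) g)" using jr zmul_mult by simp
      then have "f (zmul j g) = of_int t * f (zmul (int n0) g)" using addh_zmul[OF hf n0B] by simp
      also have "\<dots> = of_int t * of_nat n0 * q" using q Pn0 by (simp add: P_def)
      also have "\<dots> = of_int j * q" using jr \<open>r = 0\<close> by simp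
      finally show ?thesis using fd j_def by (simp add: algebra_simps)
    qed
  qed
  define f' where "f' x = (case (SOME bm. fst bm \<in> ?B \<and> x = fst bm + zmul (snd bm) g) of (b, m) \<Rightarrow> f b + of_int m * q)" for x
  have f'_eq: "f' x = f b + of_int m * q" if "b \<in> ?B" "x = b + zmul m g" for x b m
  proof -
    have ex: "\<exists>bm. fst bm \<in> ?B \<and> x = fst bm + zmul (snd bm) g" using that by (intro exI[of _ "(b,m)"]) simp
    obtain b1 m1 where bm1: "(SOME bm. fst bm \<in> ?B \<and> x = fst bm + zmul (snd bm) g) = (b1, m1)"
      by (metis prod.exhaust)
    have h1: "b1 \<in> ?B \<and> x = b1 + zmul m1 g" using someI_ex[OF ex] bm1 by simp
    then have "f' x = f b1 + of_int m1 * q" unfolding f'_def bm1 by simp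
    also have "\<dots> = f b + of_int m * q" using wd[of b1 b m1 m] that h1 by simp
    finally show ?thesis .
  qed
  show ?thesis
  proof (intro exI conjI ballI impI)
    show "addh (zspan (insert g Y)) f'"
      unfolding addh_def
    proof (intro ballI)
      fix x y assume "x \<in> zspan (insert g Y)" "y \<in> zspan (insert g Y)"
      then obtain b1 m1 b2 m2 where x: "x = b1 + zmul m1 g" "b1 \<in> ?B" and y: "y = b2 + zmul m2 g" "b2 \<in> ?B"
        unfolding zspan_insert by blast
      have "x + y = (b1 + b2) + zmul (m1 + m2) g" using x y by (simp add: zmul_add algebra_simps)
      then have "f' (x + y) = f (b1 + b2) + of_int (m1 + m2) * q" using f'_eq zspan_add x y by blast
      also have "\<dots> = (f b1 + of_int m1 * q) + (f b2 + of_int m2 * q)"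
        using hf x y unfolding addh_def by (simp add: algebra_simps)
      also have "\<dots> = f' x + f' y" using f'_eq x y by simp
      finally show "f' (x + y) = f' x + f' y" .
    qed
  next
    fix x assume "x \<in> ?B"
    then show "f' x = f x" using f'_eq[of x x 0] by simp
  next
    assume "\<forall>n>0. zmul n g \<notin> ?B"
    then have "\<not> (\<exists>n. P n)" unfolding P_def by auto
    then have "q = q0" unfolding q_def by (rule if_not_P)
    then show "f' g = q0" using f'_eq[of 0 g 1] zspan.z0[of Y] addh_0[OF hf] by simp
  qed
qed

lemma ext_fin:
  fixes f :: "'a::ab_group_add \<Rightarrow> rat"
  assumes "finite X" "addh (zspan Y) f"
  shows "\<exists>f'. addh (zspan (X \<union> Y)) f' \<and> (\<forall>x\<in>zspan Y. f' x = f x)"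
  using assms(1)
proof (induct X rule: finite_induct)
  case empty then show ?case using assms(2) by auto
next
  case (insert g X)
  then obtain f1 where f1: "addh (zspan (X \<union> Y)) f1" "\<forall>x\<in>zspan Y. f1 x = f x" by blast
  obtain f2 where f2: "addh (zspan (insert g (X \<union> Y))) f2" "\<forall>x\<in>zspan (X \<union> Y). f2 x = f1 x"
    using ext_one[OF f1(1), of g 0] by blast
  have "zspan Y \<subseteq> zspan (X \<union> Y)" by (rule zspan_mono) auto
  then show ?case using f1 f2 by (intro exI[of _ f2]) auto
qed

lemma addh_sub: "A \<subseteq> B \<Longrightarrow> addh B f \<Longrightarrow> addh A f"
  unfolding addh_def by blast

lemma sep:
  fixes d :: "'a::ab_group_add"
  assumes tf: "torsion_free TYPE('a)" and "finite X" "d \<in> zspan X" "d \<noteq> 0"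
  shows "\<exists>f. addh (zspan X) f \<and> f d \<noteq> 0"
proof -
  have h0: "addh (zspan {}) (\<lambda>_::'a. 0::rat)" by (simp add: addh_def)
  obtain f1 where f1: "addh (zspan {d}) f1" "(\<forall>n>0. zmul n d \<notin> zspan {}) \<longrightarrow> f1 d = 1"
    using ext_one[OF h0, of d 1] by auto
  have "\<forall>n>0. zmul n d \<notin> zspan {}" using zspan_empty zmul_torsion[OF tf] assms(4) by fastforce
  then have f1d: "f1 d = 1" using f1 by simp
  obtain f2 where f2: "addh (zspan (X \<union> {d})) f2" "\<forall>x\<in>zspan {d}. f2 x = f1 x"
    using ext_fin[OF assms(2) f1(1)] by blast
  have "d \<in> zspan {d}" by (rule zspan_gen) simp
  then have "f2 d = 1" using f2 f1d by simp
  moreover have "addh (zspan X) f2" using f2(1) zspan_mono[of X "X \<union> {d}"] addh_sub by blast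
  ultimately show ?thesis by auto
qed

lemma combine:
  fixes B :: "'a::ab_group_add set"
  assumes "finite D" "\<forall>d\<in>D. \<exists>f. addh B f \<and> f d \<noteq> 0"
  shows "\<exists>f. addh B f \<and> (\<forall>d\<in>D. f d \<noteq> 0)"
  using assms
proof (induct D rule: finite_induct)
  case empty then show ?case by (intro exI[of _ "\<lambda>_. 0"]) (simp add: addh_def)
next
  case (insert d0 D)
  then obtain f where f: "addh B f" "\<forall>d\<in>D. f d \<noteq> 0" by auto
  obtain f' where f': "addh B f'" "f' d0 \<noteq> 0" using insert by auto
  have "finite ((\<lambda>d. - f d / f' d) ` insert d0 D)" using insert by simp
  then obtain t :: rat where t: "t \<notin> (\<lambda>d. - f d / f' d) ` insert d0 D"
    using ex_new_if_finite[OF infinite_UNIV_char_0] by blast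
  define h where "h x = f x + t * f' x" for x
  have "addh B h" using f(1) f'(1) unfolding addh_def h_def by (simp add: algebra_simps)
  moreover have "h d \<noteq> 0" if "d \<in> insert d0 D" for d
  proof (cases "f' d = 0")
    case True
    then have "d \<in> D" using that f'(2) by auto
    then show ?thesis using True f(2) by (simp add: h_def)
  next
    case False
    show ?thesis
    proof
      assume "h d = 0"
      then have "t = - f d / f' d" using False unfolding h_def by (simp add: field_simps)
      then show False using t that by blast
    qed
  qed
  ultimately show ?case by blast
qed

lemma rescale:
  fixes f :: "'a \<Rightarrow> rat"
  assumes "finite X"
  shows "\<exists>N::int. N > 0 \<and> (\<forall>g\<in>X. of_int N * f g \<in> \<int>)"
  using assms
proof (induct X rule: finite_induct)
  case empty then show ?case by (intro exI[of _ 1]) simp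
next
  case (insert g X)
  then obtain N where N: "N > 0" "\<forall>h\<in>X. of_int N * f h \<in> \<int>" by auto
  obtain a b where ab: "quotient_of (f g) = (a, b)" by (cases "quotient_of (f g)")
  have fg: "f g = of_int a / of_int b" using quotient_of_div[OF ab] .
  have b: "b > 0" using quotient_of_denom_pos[OF ab] .
  have "of_int (N * b) * f h \<in> \<int>" if "h \<in> X" for h
  proof -
    have "of_int (N * b) * f h = of_int b * (of_int N * f h)" by simp
    then show ?thesis using N(2) that by (metis Ints_mult Ints_of_int)
  qed
  moreover have "of_int (N * b) * f g = of_int (N * a)" using fg b by simp
  then have "of_int (N * b) * f g \<in> \<int>" by (metis Ints_of_int)
  ultimately have "\<forall>h\<in>insert g X. of_int (N * b) * f h \<in> \<int>" by blast
  moreover have "N * b > 0" using N b by simp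
  ultimately show ?case by blast
qed

lemma ints_span:
  fixes F :: "'a::ab_group_add \<Rightarrow> rat"
  assumes "addh (zspan X) F" "\<forall>g\<in>X. F g \<in> \<int>" "x \<in> zspan X"
  shows "F x \<in> \<int>"
  using assms(3)
proof (induct x rule: zspan.induct)
  case z0 then show ?case using addh_0[OF assms(1)] by simp
next
  case (zadd x g)
  then have "F (x + g) = F x + F g" using assms(1) zspan_gen unfolding addh_def by blast
  then show ?case using zadd assms(2) by simp
next
  case (zsub x g)
  then have "F (x - g) = F x - F g" using addh_diff[OF assms(1)] zspan_gen by blast
  then show ?case using zsub assms(2) by simp
qed

lemma main_hom:
  fixes X :: "'a::ab_group_add set"
  assumes tf: "torsion_free TYPE('a)" and "finite X" "finite D" "D \<subseteq> zspan X" "0 \<notin> D"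
  shows "\<exists>F. addh (zspan X) F \<and> (\<forall>x\<in>zspan X. F x \<in> \<int>) \<and> (\<forall>d\<in>D. F d \<noteq> 0)"
proof -
  have "\<forall>d\<in>D. \<exists>f. addh (zspan X) f \<and> f d \<noteq> 0"
    using sep[OF tf assms(2)] assms(4,5) by blast
  then obtain f where f: "addh (zspan X) f" "\<forall>d\<in>D. f d \<noteq> 0" using combine[OF assms(3)] by blast
  obtain N :: int where N: "N > 0" "\<forall>g\<in>X. of_int N * f g \<in> \<int>" using rescale[OF assms(2)] by blast
  define F where "F x = of_int N * f x" for x
  have aF: "addh (zspan X) F" using f(1) unfolding addh_def F_def by (simp add: algebra_simps)
  moreover have "\<forall>x\<in>zspan X. F x \<in> \<int>" using ints_span[OF aF] N(2) unfolding F_def by blast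
  moreover have "\<forall>d\<in>D. F d \<noteq> 0" using f(2) N(1) unfolding F_def by simp
  ultimately show ?thesis by blast
qed



lemma nat_mod_add_lemma:
  assumes "(p::nat) > 0"
  shows "nat ((x + y) mod int p) = (nat (x mod int p) + nat (y mod int p)) mod p"
proof -
  have "int ((nat (x mod int p) + nat (y mod int p)) mod p) = (x mod int p + y mod int p) mod int p"
    using assms by (simp add: of_nat_mod)
  also have "\<dots> = (x + y) mod int p" by (simp add: mod_add_eq)
  finally show ?thesis by (metis nat_int)
qed

lemma mod_nonzero_lemma:
  assumes "(x::int) \<noteq> 0" "\<bar>x\<bar> < int p"
  shows "x mod int p \<noteq> 0"
proof
  assume "x mod int p = 0"
  then have "int p dvd x" by auto
  then have "\<bar>int p\<bar> \<le> \<bar>x\<bar>" using assms(1) dvd_imp_le_int by blast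
  then show False using assms(2) by simp
qed

lemma foldl_prod_add:
  "foldl prod_add a l = (fst a + sum_list (map fst l), snd a + sum_list (map snd l))"
  by (induct l arbitrary: a) (simp_all add: prod_add_def algebra_simps)

lemma sum_in_zspan: "finite A \<Longrightarrow> (\<forall>a\<in>A. h a \<in> zspan X) \<Longrightarrow> sum h A \<in> zspan X"
  by (induct A rule: finite_induct) (auto intro: zspan.z0 zspan_add)

theorem corollary4p5:
  fixes k :: nat
  assumes "0 < k"
    and "infinite {p::nat. prime p \<and>
           (\<forall>S. S \<subseteq> ({0..<p} \<times> (UNIV :: ('h::{finite,ab_group_add}) set)) - {(0, 0)}
                 \<and> card S = k \<and> nonzero_sum (zp_add p) (0, 0) S
                 \<longrightarrow> sequenceable (zp_add p) (0, 0) S)}"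
    and "torsion_free TYPE('g::ab_group_add)"
  shows "\<forall>S. S \<subseteq> (UNIV :: ('g \<times> 'h) set) - {(0, 0)} \<and> finite S \<and> card S = k
               \<and> nonzero_sum prod_add (0, 0) S
             \<longrightarrow> sequenceable prod_add (0, 0) S"
proof (intro allI impI, elim conjE)
  fix S :: "('g \<times> 'h) set"
  assume S0: "S \<subseteq> UNIV - {(0, 0)}" and fS: "finite S" and cS: "card S = k"
    and nzS: "nonzero_sum prod_add (0, 0) S"
  define P where "P = {p::nat. prime p \<and>
           (\<forall>S. S \<subseteq> ({0..<p} \<times> (UNIV :: 'h set)) - {(0, 0)}
                 \<and> card S = k \<and> nonzero_sum (zp_add p) (0, 0) S
                 \<longrightarrow> sequenceable (zp_add p) (0, 0) S)}"
  have infP: "infinite P" using assms(2) unfolding P_def .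
  define G0 where "G0 = fst ` S"
  define B where "B = zspan G0"
  have fG0: "finite G0" using fS unfolding G0_def by simp
  have G0B: "G0 \<subseteq> B" unfolding B_def using zspan_gen by blast
  define \<sigma> where "\<sigma> = ((\<Sum>s\<in>S. fst s), (\<Sum>s\<in>S. snd s))"
  have foldl_sigma: "foldl prod_add (0,0) xs = \<sigma>" if "distinct xs" "set xs = S" for xs
    using that by (simp add: foldl_prod_add \<sigma>_def sum_list_distinct_conv_sum_set)
  have sigma_nz: "\<sigma> \<noteq> (0,0)" using nzS foldl_sigma unfolding nonzero_sum_def by metis
  have sigmaB: "fst \<sigma> \<in> B" unfolding \<sigma>_def B_def G0_def using fS
    by (simp only: fst_conv, rule sum_in_zspan) (auto intro: zspan_gen)
  define D where "D = {d. d \<noteq> 0 \<and> (d \<in> G0 \<or> d \<in> (\<lambda>(a,b). a - b) ` (G0 \<times> G0) \<or> d = fst \<sigma>)}"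
  have fD: "finite D"
    by (rule finite_subset[of _ "G0 \<union> (\<lambda>(a,b). a - b) ` (G0 \<times> G0) \<union> {fst \<sigma>}"])
       (auto simp: D_def fG0)
  have DB: "D \<subseteq> zspan G0" using G0B sigmaB unfolding D_def B_def
    by (auto intro: zspan_diff)
  have D0: "0 \<notin> D" unfolding D_def by simp
  obtain F where F: "addh B F" "\<forall>x\<in>B. F x \<in> \<int>" "\<forall>d\<in>D. F d \<noteq> 0"
    using main_hom[OF assms(3) fG0 fD DB D0] unfolding B_def by blast
  define fi where "fi x = \<lfloor>F x\<rfloor>" for x
  have fiF: "of_int (fi x) = F x" if "x \<in> B" for x
    using F(2) that unfolding fi_def by (metis Ints_cases floor_of_int)
  have fi_add: "fi (x + y) = fi x + fi y" if "x \<in> B" "y \<in> B" for x y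
  proof -
    have "x + y \<in> B" using that zspan_add unfolding B_def by blast
    then have "(of_int (fi (x+y)) :: rat) = of_int (fi x + fi y)"
      using fiF that F(1) unfolding addh_def by simp
    then show ?thesis by (simp only: of_int_eq_iff)
  qed
  have fi_diff: "fi (x - y) = fi x - fi y" if "x \<in> B" "y \<in> B" for x y
  proof -
    have "x - y \<in> B" using that zspan_diff unfolding B_def by blast
    then have "(of_int (fi (x-y)) :: rat) = of_int (fi x - fi y)"
      using fiF that addh_diff[OF F(1)[unfolded B_def]] unfolding B_def by simp
    then show ?thesis by (simp only: of_int_eq_iff)
  qed
  have fi0: "fi 0 = 0" using fi_add[of 0 0] zspan.z0[of G0] unfolding B_def by simp
  define M where "M = (\<Sum>d\<in>D. nat \<bar>fi d\<bar>)"
  obtain p where pP: "p \<in> P" and pM: "p > M" 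
    using infP finite_subset[of P "{..M}"] by (metis atMost_iff finite_atMost not_le subsetI)
  have p0: "p > 0" using pM by simp
  have key: "fi d mod int p \<noteq> 0" if "d \<in> D" for d
  proof (rule mod_nonzero_lemma)
    have "F d \<noteq> 0" using F(3) that by blast
    moreover have "d \<in> B" using that DB unfolding B_def by blast
    ultimately show "fi d \<noteq> 0" using fiF[of d] by auto
    have "nat \<bar>fi d\<bar> \<le> M" unfolding M_def using fD that by (intro member_le_sum) auto
    then show "\<bar>fi d\<bar> < int p" using pM by linarith
  qed
  define \<phi> :: "'g \<times> 'h \<Rightarrow> nat \<times> 'h" where "\<phi> u = (nat (fi (fst u) mod int p), snd u)" for u
  have hom: "\<phi> (prod_add u v) = zp_add p (\<phi> u) (\<phi> v)" if "fst u \<in> B" "fst v \<in> B" for u v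
    using that fi_add nat_mod_add_lemma[OF p0] unfolding \<phi>_def prod_add_def zp_add_def by simp
  have phi0: "\<phi> (0,0) = (0,0)" unfolding \<phi>_def using fi0 by simp
  have SB: "fst u \<in> B" if "u \<in> S" for u using that G0B unfolding G0_def by auto
  have foldl_hom: "foldl (zp_add p) (\<phi> a) (map \<phi> l) = \<phi> (foldl prod_add a l)"
    if "fst a \<in> B" "set l \<subseteq> S" for a l
    using that
  proof (induct l arbitrary: a)
    case Nil then show ?case by simp
  next
    case (Cons x l)
    have "fst x \<in> B" using Cons SB by simp
    then have "fst (prod_add a x) \<in> B" using Cons(2) zspan_add unfolding prod_add_def B_def by simp
    moreover have "\<phi> (prod_add a x) = zp_add p (\<phi> a) (\<phi> x)" using hom[of a x] SB Cons by simp
    ultimately show ?case using Cons(1)[of "prod_add a x"] Cons(3) by simp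
  qed
  have psum_hom: "psum (zp_add p) (0,0) (map \<phi> l) i = \<phi> (psum prod_add (0,0) l i)"
    if "set l \<subseteq> S" for l i
  proof -
    have "set (take i l) \<subseteq> S" using that set_take_subset by fastforce
    then show ?thesis unfolding psum_def take_map using foldl_hom[of "(0,0)" "take i l"] phi0
      zspan.z0[of G0] unfolding B_def by simp
  qed
  have phi_nz: "\<phi> u \<noteq> (0,0)" if "fst u \<in> D \<or> snd u \<noteq> 0" for u
  proof -
    have "0 \<le> fi (fst u) mod int p" using p0 by simp
    then show ?thesis using that key unfolding \<phi>_def by fastforce
  qed
  have inj: "inj_on \<phi> S"
  proof
    fix u v assume uv: "u \<in> S" "v \<in> S" "\<phi> u = \<phi> v"
    then have sn: "snd u = snd v" unfolding \<phi>_def by simp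
    have "nat (fi (fst u) mod int p) = nat (fi (fst v) mod int p)" using uv unfolding \<phi>_def by simp
    moreover have "0 \<le> fi (fst u) mod int p" "0 \<le> fi (fst v) mod int p" using p0 by simp_all
    ultimately have "fi (fst u) mod int p = fi (fst v) mod int p" by (simp add: eq_nat_nat_iff)
    then have "(fi (fst u) - fi (fst v)) mod int p = 0" by (simp add: mod_diff_eq[symmetric])
    then have m0: "fi (fst u - fst v) mod int p = 0" using fi_diff SB uv by simp
    have "fst u = fst v"
    proof (rule ccontr)
      assume "fst u \<noteq> fst v"
      moreover have "fst u - fst v \<in> (\<lambda>(a,b). a - b) ` (G0 \<times> G0)"
        using uv unfolding G0_def by (intro image_eqI[of _ _ "(fst u, fst v)"]) auto
      ultimately have "fst u - fst v \<in> D" unfolding D_def by simp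
      then show False using key[of "fst u - fst v"] m0 by simp
    qed
    then show "u = v" using sn by (simp add: prod_eq_iff)
  qed
  define S' where "S' = \<phi> ` S"
  have S'sub: "S' \<subseteq> ({0..<p} \<times> (UNIV :: 'h set)) - {(0, 0)}"
  proof
    fix w assume "w \<in> S'"
    then obtain u where u: "u \<in> S" "w = \<phi> u" unfolding S'_def by blast
    have "fst w < p" using u p0 unfolding \<phi>_def by (simp add: nat_less_iff)
    moreover have "w \<noteq> (0,0)"
    proof (cases "snd u = 0")
      case True
      then have "fst u \<noteq> 0" using u S0 by (auto simp: prod_eq_iff)
      then have "fst u \<in> D" using u unfolding D_def G0_def by auto
      then show ?thesis using phi_nz[of u] u by simp
    next
      case False then show ?thesis using phi_nz[of u] u by simp
    qed
    ultimately show "w \<in> ({0..<p} \<times> (UNIV :: 'h set)) - {(0, 0)}" by (cases w) auto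
  qed
  have cS': "card S' = k" unfolding S'_def using card_image[OF inj] cS by simp
  have phi_sigma: "\<phi> \<sigma> \<noteq> (0,0)"
  proof (cases "snd \<sigma> = 0")
    case True
    then have "fst \<sigma> \<noteq> 0" using sigma_nz by (auto simp: prod_eq_iff)
    then have "fst \<sigma> \<in> D" unfolding D_def by auto
    then show ?thesis using phi_nz[of \<sigma>] by simp
  next
    case False then show ?thesis using phi_nz[of \<sigma>] by simp
  qed
  obtain xs0 where xs0: "distinct xs0" "set xs0 = S" using finite_distinct_list[OF fS] by blast
  have "nonzero_sum (zp_add p) (0, 0) S'"
    unfolding nonzero_sum_def
  proof (intro exI conjI)
    show "distinct (map \<phi> xs0)" using xs0 inj by (simp add: distinct_map)
    show "set (map \<phi> xs0) = S'" using xs0 unfolding S'_def by simp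
    have "foldl (zp_add p) (0,0) (map \<phi> xs0) = \<phi> (foldl prod_add (0,0) xs0)"
      using foldl_hom[of "(0,0)" xs0] phi0 xs0 zspan.z0[of G0] unfolding B_def by simp
    then show "foldl (zp_add p) (0,0) (map \<phi> xs0) \<noteq> (0,0)" using foldl_sigma[OF xs0] phi_sigma by simp
  qed
  then have "sequenceable (zp_add p) (0, 0) S'" using pP S'sub cS' unfolding P_def by blast
  then obtain ys where ys: "distinct ys" "set ys = S'"
    "is_sequencing (zp_add p) (0,0) ys \<or> is_rot_sequencing (zp_add p) (0,0) ys"
    unfolding sequenceable_def by blast
  define xs where "xs = map (inv_into S \<phi>) ys"
  have hinv: "\<phi> (inv_into S \<phi> y) = y" if "y \<in> set ys" for y
    using that ys(2) unfolding S'_def by (auto intro: f_inv_into_f)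
  have mxs: "map \<phi> xs = ys" unfolding xs_def map_map comp_def by (rule map_idI) (rule hinv)
  have sxs: "set xs = S" unfolding xs_def using ys(2) inj unfolding S'_def
    by (simp add: inv_into_image_cancel)
  have dxs: "distinct xs" using ys(1) mxs by (metis distinct_map)
  have lxs: "length xs = length ys" unfolding xs_def by simp
  have ps: "psum (zp_add p) (0,0) ys i = \<phi> (psum prod_add (0,0) xs i)" for i
    using psum_hom[of xs i] sxs mxs by simp
  show "sequenceable prod_add (0, 0) S"
    unfolding sequenceable_def
  proof (intro exI conjI)
    show "distinct xs" "set xs = S" using dxs sxs by auto
    show "is_sequencing prod_add (0,0) xs \<or> is_rot_sequencing prod_add (0,0) xs"
    proof (cases "is_sequencing (zp_add p) (0,0) ys")
      case True
      have "map (psum (zp_add p) (0,0) ys) [0..<Suc (length ys)]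
            = map \<phi> (map (psum prod_add (0,0) xs) [0..<Suc (length xs)])"
        using ps lxs by simp
      then have "distinct (map (psum prod_add (0,0) xs) [0..<Suc (length xs)])"
        using True unfolding is_sequencing_def by (metis distinct_map)
      then show ?thesis unfolding is_sequencing_def by simp
    next
      case False
      then have "psum (zp_add p) (0,0) ys (length ys) = (0,0)"
        using ys(3) unfolding is_rot_sequencing_def by blast
      moreover have "psum prod_add (0,0) xs (length xs) = \<sigma>"
        unfolding psum_def using foldl_sigma[OF dxs sxs] by simp
      ultimately have False using ps[of "length ys"] lxs phi_sigma by simp
      then show ?thesis ..
    qed
  qed
qed

end
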